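(* Let $f$ satisfy conditions (1) and (2b), and let $n\in\mathbb{N}_0$. Then the series \[ \sum_{k=0}^\infty(-1)^k\frac{p^k}{k!}\,c_{n+2k} \] is absolutely and uniformly convergent for all $p\in[0,\infty)$.
   Context: $f:[0,\infty)\to\mathbb{R}$; $c_n=2\pi\int_0^\infty f(r)\,r^{n+1}dr$. Condition (1): there is a constant $F$ with $0\le f(r)\le F$ for all $r\ge0$, $c_0$ exists and $c_0>0$. Condition (2b): $c_{2n}$ exists for all $n\in\mathbb{N}_0$ and $c_n^{1/n}=o(n^{1/2})$ as $n\to\infty$. *)

theory Defs
  imports "HOL-Analysis.Analysis" "HOL-Library.Landau_Symbols"
begin

definition moment :: "(real \<Rightarrow> real) \<Rightarrow> nat \<Rightarrow> real" where
  "moment f n = 2 * pi * (LINT r:{0..}|lborel. f r * r ^ (n + 1))"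

definition moment_exists :: "(real \<Rightarrow> real) \<Rightarrow> nat \<Rightarrow> bool" where
  "moment_exists f n \<longleftrightarrow> set_integrable lborel {0..} (\<lambda>r. f r * r ^ (n + 1))"

end

theory Submission
  imports Defs "HOL-Real_Asymp.Real_Asymp"
begin

lemma kk_fact_le_exp: "real k ^ k / fact k \<le> exp (real k)"
proof -
  have "(\<Sum>j\<in>{k}. real k ^ j / fact j) \<le> (\<Sum>j. real k ^ j / fact j)"
    using summable_exp_generic[of "real k"]
    by (intro sum_le_suminf) (auto simp: divide_inverse ac_simps)
  also have "\<dots> = exp (real k)"
    by (simp add: exp_def divide_inverse ac_simps)
  finally show ?thesis by simp
qed

lemma four: "((2::real) ^ k)^2 = 4 ^ k"
  by (simp add: power2_eq_square power_mult_distrib[symmetric])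

lemma key_summable:
  fixes a :: "nat \<Rightarrow> real" and p :: real and n :: nat
  assumes nonneg: "\<And>m. a m \<ge> 0"
    and gr: "\<And>\<epsilon>. \<epsilon> > 0 \<Longrightarrow> eventually (\<lambda>m. a m powr (1 / real m) \<le> \<epsilon> * sqrt (real m)) sequentially"
    and p: "p \<ge> 0"
  shows "summable (\<lambda>k. p ^ k / fact k * a (n + 2 * k))"
proof -
  define \<delta> where "\<delta> = 1 / (12 * exp 1 * (p + 1))"
  have \<delta>pos: "\<delta> > 0" using p by (simp add: \<delta>_def)
  from gr[of "sqrt \<delta>"] \<delta>pos obtain M where hM:
    "\<And>m. m \<ge> M \<Longrightarrow> a m powr (1 / real m) \<le> sqrt \<delta> * sqrt (real m)"
    by (auto simp: eventually_sequentially)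
  have sq: "(a m)^2 \<le> \<delta> ^ m * real m ^ m" if "m \<ge> M" "m \<ge> 1" for m
  proof (cases "a m = 0")
    case True then show ?thesis using \<delta>pos by simp
  next
    case False
    then have apos: "a m > 0" using nonneg[of m] by simp
    have "a m = (a m powr (1 / real m)) ^ m"
      using apos that(2) by (simp add: powr_realpow[symmetric] powr_powr)
    also have "\<dots> \<le> (sqrt \<delta> * sqrt (real m)) ^ m"
      by (intro power_mono hM that(1)) simp
    finally have "(a m)^2 \<le> ((sqrt \<delta> * sqrt (real m)) ^ m)^2"
      using apos by (intro power_mono) auto
    also have "\<dots> = ((sqrt \<delta> * sqrt (real m))^2) ^ m"
      by (simp only: power_mult[symmetric] mult.commute)
    also have "\<dots> = \<delta> ^ m * real m ^ m"
      using \<delta>pos by (simp add: power_mult_distrib)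
    finally show ?thesis .
  qed
  define q where "q = 3 * \<delta> * p * exp 1"
  have q0: "q \<ge> 0" using \<delta>pos p by (simp add: q_def)
  have q4: "q \<le> 1/4"
  proof -
    have pp: "p + 1 > 0" using p by simp_all
    have e: "exp (1::real) > 0" by simp
    have "q = (3 * p * exp 1) / (12 * exp 1 * (p + 1))"
      unfolding q_def \<delta>_def by (simp add: divide_inverse ac_simps)
    also have "\<dots> \<le> (3 * (p+1) * exp 1) / (12 * exp 1 * (p + 1))"
      using pp e p by (intro divide_right_mono mult_right_mono) auto
    also have "\<dots> = 1/4" using pp e by simp
    finally show ?thesis .
  qed
  define C where "C = (3 * \<delta>) ^ n"
  have C0: "C \<ge> 0" using \<delta>pos by (simp add: C_def)
  have poly: "eventually (\<lambda>k. real k ^ n \<le> 4 ^ k) sequentially" by real_asymp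
  have ev: "eventually (\<lambda>k. norm (p ^ k / fact k * a (n + 2 * k)) \<le> sqrt C * (1/2) ^ k) sequentially"
    using poly eventually_ge_at_top[of "max M (max n 1)"]
  proof eventually_elim
    case (elim k)
    define m where "m = n + 2 * k"
    define t where "t = p ^ k / fact k * a m"
    have k1: "k \<ge> 1" "k \<ge> n" "k \<ge> M" using elim by auto
    have t0: "t \<ge> 0" using p nonneg[of m] by (simp add: t_def)
    have m3: "real m \<le> 3 * real k" using k1 by (simp add: m_def)
    have "t ^ 2 = p ^ (2 * k) * (a m)^2 / (fact k)^2"
      by (simp add: t_def power_mult_distrib power_divide power_mult[symmetric] mult.commute)
    also have "\<dots> \<le> p ^ (2 * k) * (\<delta> ^ m * real m ^ m) / (fact k)^2"
      using sq[of m] k1 p by (intro divide_right_mono mult_left_mono) (auto simp: m_def)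
    also have "\<dots> \<le> p ^ (2 * k) * (\<delta> ^ m * (3 * real k) ^ m) / (fact k)^2"
      using \<delta>pos p by (intro divide_right_mono mult_left_mono power_mono m3) auto
    also have "\<dots> = (3 * \<delta> * real k) ^ n * (3 * \<delta> * p) ^ (2 * k) * (real k ^ k / fact k) ^ 2"
      by (simp add: m_def power_add power_mult_distrib power_divide power_mult[symmetric] mult.commute)
    also have "\<dots> \<le> (3 * \<delta> * real k) ^ n * (3 * \<delta> * p) ^ (2 * k) * (exp (real k)) ^ 2"
      using \<delta>pos p by (intro mult_left_mono power_mono kk_fact_le_exp) auto
    also have "\<dots> = C * real k ^ n * q ^ (2 * k)"
      using exp_of_nat_mult[of k "1::real"]
      by (simp add: C_def q_def power_mult_distrib power_mult[symmetric] mult.commute)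
    also have "\<dots> \<le> C * 4 ^ k * (1/4) ^ (2 * k)"
      using C0 q0 q4 elim by (intro mult_mono power_mono mult_left_mono) auto
    also have "\<dots> = (sqrt C * (1/2) ^ k) ^ 2"
    proof -
      have "C * 4 ^ k * (1/4) ^ (2 * k) = C * ((1/4) ^ k * (4 ^ k * (1/4) ^ k))"
      proof -
        have "(1/4::real) ^ (2 * k) = (1/4) ^ k * (1/4) ^ k" by (simp only: mult_2 power_add)
        then show ?thesis by (simp only: mult_ac)
      qed
      also have "\<dots> = C * (1/4) ^ k" by (simp add: power_mult_distrib[symmetric])
      also have "\<dots> = (sqrt C) ^ 2 * ((1/2) ^ k) ^ 2"
        using C0 four[of k] by (simp add: power_divide)
      finally show ?thesis by (simp add: power_mult_distrib)
    qed
    finally have tt: "t ^ 2 \<le> (sqrt C * (1/2) ^ k) ^ 2" .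
    have "0 \<le> sqrt C * (1/2::real) ^ k" using C0 by simp
    then have "t \<le> sqrt C * (1/2) ^ k"
      using power2_le_imp_le[OF tt] by blast
    then show ?case using t0 by (simp add: t_def m_def)
  qed
  show ?thesis
    by (rule summable_comparison_test_ev[OF ev]) (intro summable_mult summable_geometric, simp)
qed

theorem lemma8:
  fixes f :: "real \<Rightarrow> real" and F :: real and n :: nat
  assumes cond1_bound: "\<And>r. r \<ge> 0 \<Longrightarrow> 0 \<le> f r \<and> f r \<le> F"
      and cond1_c0: "moment_exists f 0" "moment f 0 > 0"
      and cond2b_ex: "\<And>m. moment_exists f (2 * m)"
      and cond2b_growth: "(\<lambda>m. moment f m powr (1 / real m)) \<in> o(\<lambda>m. sqrt (real m))"
  shows "\<forall>p\<ge>0. summable (\<lambda>k. \<bar>(-1) ^ k * p ^ k / fact k * moment f (n + 2 * k)\<bar>)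
       \<and> (\<forall>P\<ge>0. uniformly_convergent_on {0..P}
           (\<lambda>N p. \<Sum>k<N. (-1) ^ k * p ^ k / fact k * moment f (n + 2 * k)))"
proof -
  have nonneg: "moment f m \<ge> 0" for m
  proof -
    have "0 \<le> (LINT r:{0..}|lborel. f r * r ^ (m + 1))"
      unfolding set_lebesgue_integral_def
      by (intro integral_nonneg_AE AE_I2) (auto simp: indicator_def cond1_bound)
    then show ?thesis by (simp add: moment_def)
  qed
  have gr: "eventually (\<lambda>m. moment f m powr (1 / real m) \<le> \<epsilon> * sqrt (real m)) sequentially"
    if "\<epsilon> > 0" for \<epsilon>
    using landau_o.smallD[OF cond2b_growth that] by eventually_elim auto
  have S: "summable (\<lambda>k. p ^ k / fact k * moment f (n + 2 * k))" if "p \<ge> 0" for p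
    using key_summable[of "moment f", OF nonneg gr that] by blast
  have abs_eq: "\<bar>(-1) ^ k * p ^ k / fact k * moment f (n + 2 * k)\<bar> = p ^ k / fact k * moment f (n + 2 * k)"
    if "p \<ge> 0" for p :: real and k
    using that nonneg[of "n + 2 * k"] by (simp add: abs_mult)
  show ?thesis
  proof (intro allI impI conjI)
    fix p :: real assume "p \<ge> 0"
    then show "summable (\<lambda>k. \<bar>(-1) ^ k * p ^ k / fact k * moment f (n + 2 * k)\<bar>)"
      using S[of p] by (simp only: abs_eq)
  next
    fix P :: real assume P: "P \<ge> 0"
    have "uniform_limit {0..P} (\<lambda>N p. \<Sum>k<N. (-1) ^ k * p ^ k / fact k * moment f (n + 2 * k))
            (\<lambda>p. \<Sum>k. (-1) ^ k * p ^ k / fact k * moment f (n + 2 * k)) sequentially"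
    proof (rule Weierstrass_m_test_ev[OF _ S[OF P]], rule always_eventually, intro allI ballI)
      fix k and p :: real assume "p \<in> {0..P}"
      then have "0 \<le> p" "p \<le> P" by auto
      then show "norm ((-1) ^ k * p ^ k / fact k * moment f (n + 2 * k)) \<le> P ^ k / fact k * moment f (n + 2 * k)"
        using nonneg[of "n + 2 * k"]
        by (simp only: real_norm_def abs_eq) (intro mult_right_mono divide_right_mono power_mono, auto)
    qed
    then show "uniformly_convergent_on {0..P} (\<lambda>N p. \<Sum>k<N. (-1) ^ k * p ^ k / fact k * moment f (n + 2 * k))"
      by (auto simp: uniformly_convergent_on_def)
  qed
qed

end
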